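(* Let $\mathbf U$ be a real $3\times3$ positive-definite symmetric matrix, $|\hat{\mathbf e}|=1$, $\hat{\mathbf U}=(-\mathbf I+2\hat{\mathbf e}\otimes\hat{\mathbf e})\mathbf U(-\mathbf I+2\hat{\mathbf e}\otimes\hat{\mathbf e})$, and let $\hat{\mathbf R}\in\mathrm{SO}(3)$, nonzero $\mathbf a,\mathbf n\in\mathbb R^3$ satisfy $\hat{\mathbf R}\hat{\mathbf U}=\mathbf U+\mathbf a\otimes\mathbf n$. Consider the conditions (CC1) the middle eigenvalue $\lambda_2$ of $\mathbf U$ equals $1$; (CC2) $\mathbf a\cdot\mathbf U\,\mathrm{cof}(\mathbf U^2-\mathbf I)\mathbf n=0$; (CC2') $(\mathbf a\cdot\hat{\mathbf v}_2)(\mathbf n\cdot\hat{\mathbf v}_2)=0$, where $\hat{\mathbf v}_2$ is a normalized eigenvector of $\mathbf U$ corresponding to its middle eigenvalue; (CC3) $\mathrm{tr}\,\mathbf U^2-\det\mathbf U^2-\frac{|\mathbf a|^2|\mathbf n|^2}{4}-2\ge0$. Then (CC1), (CC2), (CC3) hold if and only if (CC1), (CC2'), (CC3) hold.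
   Context: $\mathbf a\otimes\mathbf n$ is the matrix $\mathbf x\mapsto(\mathbf n\cdot\mathbf x)\mathbf a$; $\mathrm{cof}\,\mathbf A$ is the cofactor matrix, $(\mathrm{cof}\,\mathbf A)_{ij}=(-1)^{i+j}\det$ of the submatrix obtained by deleting row $i$ and column $j$. *)

theory Defs
  imports "HOL-Analysis.Analysis"
begin

definition outer :: "real^'n \<Rightarrow> real^'m \<Rightarrow> real^'m^'n" where
  "outer a n = (\<chi> i j. a $ i * n $ j)"

text \<open>Position (0,1,2) of an index of the 3-element / 2-element index types.\<close>
definition ix3 :: "3 \<Rightarrow> nat" where "ix3 i = nat (Rep_bit1 i)"
definition ix2 :: "2 \<Rightarrow> nat" where "ix2 k = nat (Rep_bit0 k)"

definition skip :: "nat \<Rightarrow> nat \<Rightarrow> nat" where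
  "skip i k = (if k < i then k else Suc k)"

definition cof :: "real^3^3 \<Rightarrow> real^3^3" where
  "cof A = (\<chi> i j. (-1) ^ (ix3 i + ix3 j) *
      det (\<chi> (k::2) (l::2). A $ of_nat (skip (ix3 i) (ix2 k)) $ of_nat (skip (ix3 j) (ix2 l))))"

definition sym_posdef :: "real^3^3 \<Rightarrow> bool" where
  "sym_posdef U \<longleftrightarrow> transpose U = U \<and> (\<forall>x. x \<noteq> 0 \<longrightarrow> x \<bullet> (U *v x) > 0)"

definition middle_eigenvalue :: "real^3^3 \<Rightarrow> real" where
  "middle_eigenvalue U = (THE l. \<exists>v1 v2 v3 l1 l3.
      norm v1 = 1 \<and> norm v2 = 1 \<and> norm v3 = 1 \<and>
      v1 \<bullet> v2 = 0 \<and> v1 \<bullet> v3 = 0 \<and> v2 \<bullet> v3 = 0 \<and>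
      U *v v1 = l1 *\<^sub>R v1 \<and> U *v v2 = l *\<^sub>R v2 \<and> U *v v3 = l3 *\<^sub>R v3 \<and>
      l1 \<le> l \<and> l \<le> l3)"

end

theory Submission
  imports Defs
begin
lemma ix: "ix3 1 = 1" "ix3 2 = 2" "ix3 3 = 0" "ix2 1 = 1" "ix2 2 = 0"
  unfolding ix3_def ix2_def by (simp_all add: bit1.Rep_1 bit1.Rep_numeral bit0.Rep_1 bit0.Rep_numeral)
lemma z3: "(0::3) = 3" "(4::3) = 1" "(5::3) = 2" by simp_all
lemma cof_ent:
  "cof A $ 1 $ 1 = A$2$2*A$3$3 - A$2$3*A$3$2"
  "cof A $ 1 $ 2 = - (A$2$1*A$3$3 - A$2$3*A$3$1)"
  "cof A $ 1 $ 3 = A$2$1*A$3$2 - A$2$2*A$3$1"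
  "cof A $ 2 $ 1 = - (A$1$2*A$3$3 - A$1$3*A$3$2)"
  "cof A $ 2 $ 2 = A$1$1*A$3$3 - A$1$3*A$3$1"
  "cof A $ 2 $ 3 = - (A$1$1*A$3$2 - A$1$2*A$3$1)"
  "cof A $ 3 $ 1 = A$1$2*A$2$3 - A$1$3*A$2$2"
  "cof A $ 3 $ 2 = - (A$1$1*A$2$3 - A$1$3*A$2$1)"
  "cof A $ 3 $ 3 = A$1$1*A$2$2 - A$1$2*A$2$1"
  by (simp_all add: cof_def ix skip_def det_2 z3 algebra_simps)

lemma trace_cof: "trace (cof (A - mat 1)) = det A - trace A + 2 - det (A - mat 1)"
  by (simp add: trace_def sum_3 cof_ent det_3 mat_def algebra_simps)

lemma outer_mv: "outer v w *v x = (w \<bullet> x) *\<^sub>R v"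
  by (simp add: outer_def vec_eq_iff matrix_vector_mult_def inner_vec_def mult.commute mult.left_commute sum_distrib_left)
lemma transpose_minus: "transpose (A - B) = transpose A - (transpose B :: 'a::ab_group_add^'n^'m)"
  by (simp add: transpose_def vec_eq_iff)

lemma scaleR_mv: "(c *\<^sub>R A) *v x = c *\<^sub>R (A *v (x::real^'n))"
  by (simp add: vec_eq_iff matrix_vector_mult_def sum_distrib_left mult.assoc)

lemma core_real:
  fixes a b c d e f x y z :: real
  assumes h1: "a*x+b*y+c*z=0" and h2: "b*x+d*y+e*z=0" and h3: "c*x+e*y+f*z=0" and h4: "x*x+y*y+z*z=1"
  defines "T \<equiv> (d*f - e*e) + (a*f - c*c) + (a*d - b*b)"
  shows "d*f - e*e = T*x*x" "-(b*f - e*c) = T*x*y" "b*e - d*c = T*x*z"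
        "a*f - c*c = T*y*y" "-(a*e - b*c) = T*y*z" "a*d-b*b = T*z*z"
  unfolding T_def
  using assms apply -
  by algebra+

lemma core:
  fixes M :: "real^3^3" and v :: "real^3"
  assumes sym: "transpose M = M" and Mv: "M *v v = 0" and vv: "v \<bullet> v = 1"
  shows "cof M = trace (cof M) *\<^sub>R outer v v"
proof -
  have s: "M$2$1 = M$1$2" "M$3$1 = M$1$3" "M$3$2 = M$2$3"
    using arg_cong[OF sym, of "\<lambda>A. A$1$2"] arg_cong[OF sym, of "\<lambda>A. A$1$3"] arg_cong[OF sym, of "\<lambda>A. A$2$3"]
    by (simp_all add: transpose_def)
  have e: "(M *v v)$1 = 0" "(M *v v)$2 = 0" "(M *v v)$3 = 0" using Mv by simp_all
  hence e': "M$1$1* v$1+M$1$2* v$2+M$1$3* v$3=0" "M$1$2* v$1+M$2$2* v$2+M$2$3* v$3=0"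
     "M$1$3* v$1+M$2$3* v$2+M$3$3* v$3=0"
    by (simp_all add: matrix_vector_mult_def sum_3 s)
  have vv': "v$1* v$1+v$2* v$2+v$3* v$3 = 1" using vv by (simp add: inner_vec_def sum_3)
  note C = core_real[OF e' vv']
  have tr: "trace (cof M) = (M$2$2*M$3$3 - M$2$3*M$2$3) + (M$1$1*M$3$3 - M$1$3*M$1$3) + (M$1$1*M$2$2 - M$1$2*M$1$2)"
    by (simp add: trace_def sum_3 cof_ent s)
  have E: "cof M $ 1 $ 1 = trace (cof M) * (v$1 * v$1)" "cof M $ 1 $ 2 = trace (cof M) * (v$1 * v$2)"
     "cof M $ 1 $ 3 = trace (cof M) * (v$1 * v$3)" "cof M $ 2 $ 1 = trace (cof M) * (v$2 * v$1)"
     "cof M $ 2 $ 2 = trace (cof M) * (v$2 * v$2)" "cof M $ 2 $ 3 = trace (cof M) * (v$2 * v$3)"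
     "cof M $ 3 $ 1 = trace (cof M) * (v$3 * v$1)" "cof M $ 3 $ 2 = trace (cof M) * (v$3 * v$2)"
     "cof M $ 3 $ 3 = trace (cof M) * (v$3 * v$3)"
    unfolding tr using C by (simp_all add: cof_ent s algebra_simps)
  show ?thesis
    unfolding vec_eq_iff forall_3
    by (simp add: outer_def E)
qed

theorem corollary3:
  fixes U R :: "real^3^3" and e a n v2 :: "real^3"
  assumes "sym_posdef U"
    and "norm e = 1"
    and "rotation_matrix R"
    and "a \<noteq> 0" and "n \<noteq> 0"
    and "R ** ((- mat 1 + 2 *\<^sub>R outer e e) ** U ** (- mat 1 + 2 *\<^sub>R outer e e)) = U + outer a n"
    and "norm v2 = 1" and "U *v v2 = middle_eigenvalue U *\<^sub>R v2"
  shows "(middle_eigenvalue U = 1 \<and>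
          a \<bullet> ((U ** cof (U ** U - mat 1)) *v n) = 0 \<and>
          trace (U ** U) - det (U ** U) - (norm a)^2 * (norm n)^2 / 4 - 2 \<ge> 0)
     \<longleftrightarrow> (middle_eigenvalue U = 1 \<and>
          (a \<bullet> v2) * (n \<bullet> v2) = 0 \<and>
          trace (U ** U) - det (U ** U) - (norm a)^2 * (norm n)^2 / 4 - 2 \<ge> 0)"
proof -
  have main: "a \<bullet> ((U ** cof (U ** U - mat 1)) *v n) = 0 \<longleftrightarrow> (a \<bullet> v2) * (n \<bullet> v2) = 0"
    if m1: "middle_eigenvalue U = 1"
    and c3: "trace (U ** U) - det (U ** U) - (norm a)^2 * (norm n)^2 / 4 - 2 \<ge> 0"
  proof -
    have Uv: "U *v v2 = v2" using assms(8) m1 by simp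
    have symU: "transpose U = U" using assms(1) by (simp add: sym_posdef_def)
    define M where "M = U ** U - mat 1"
    have symM: "transpose M = M"
      by (simp add: M_def matrix_transpose_mul symU transpose_minus transpose_mat)
    have Mv: "M *v v2 = 0"
      by (simp add: M_def matrix_vector_mult_diff_rdistrib matrix_vector_mul_assoc[symmetric] Uv)
    have vv: "v2 \<bullet> v2 = 1" using assms(7) by (simp add: norm_eq_1)
    have K: "cof M = trace (cof M) *\<^sub>R outer v2 v2" using core[OF symM Mv vv] .
    have dM: "det M = 0"
    proof -
      have nz: "v2 \<noteq> 0" using assms(7) by auto
      have "\<not> invertible M"
      proof
        assume "invertible M"
        then obtain B where B: "B ** M = mat 1" unfolding invertible_def by blast
        have "v2 = (B ** M) *v v2" using B by simp
        also have "\<dots> = B *v (M *v v2)" by (simp add: matrix_vector_mul_assoc)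
        also have "\<dots> = 0" using Mv by simp
        finally show False using nz by simp
      qed
      thus ?thesis by (simp add: invertible_det_nz)
    qed
    define t where "t = trace (cof M)"
    have K': "cof M = t *\<^sub>R outer v2 v2" using K unfolding t_def .
    have t: "t = det (U ** U) - trace (U ** U) + 2"
      using trace_cof[of "U ** U"] dM by (simp add: t_def M_def)
    have pos: "(norm a)^2 * (norm n)^2 > 0" using assms(4,5) by simp
    have tnz: "t \<noteq> 0" using t c3 pos by linarith
    have "a \<bullet> ((U ** cof M) *v n) = t * ((a \<bullet> v2) * (n \<bullet> v2))"
      by (simp add: K' matrix_vector_mul_assoc[symmetric] outer_mv scaleR_mv
           matrix_vector_mult_scaleR Uv algebra_simps inner_commute)
    thus ?thesis using tnz by (simp add: M_def)
  qed
  show ?thesis using main by blast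
qed
end
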